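(* Let $X$ and $Y$ be metric spaces, and suppose that $Y$ is $\mathcal P$-connected and locally $\mathcal P$-contractible for some family $\mathcal P$ of paths. Then every weakly proper local homeomorphism $f:X\to Y$ is a covering projection.
   Context: A family $\mathcal P$ of continuous paths $p:[0,1]\to Y$ in a metric space $Y$ is given. $Y$ is $\mathcal P$-connected if (i) whenever $p\in\mathcal P$, the reverse path $\bar p(t)=p(1-t)$ belongs to $\mathcal P$, and (ii) every two points of $Y$ can be joined by a path in $\mathcal P$. $Y$ is locally $\mathcal P$-contractible if every $y_0\in Y$ has an open neighborhood $U$ with a continuous homotopy $H:U\times[0,1]\to U$ such that $H(y_0,t)=y_0$ for all $t$, $H(y,0)=y_0$ and $H(y,1)=y$ for all $y\in U$, and for every $y\in U$ the path $t\mapsto H(y,t)$ belongs to $\mathcal P$. A continuous map $f:X\to Y$ is weakly proper if for every compact $K\subset Y$, each connected component of $f^{-1}(K)$ is compact in $X$. *)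

theory Defs
  imports "HOL-Analysis.Analysis"
begin

text \<open>Paths are functions real => 'b; only their values on [0,1] matter.
  A path p on [0,1] "is in" the family P if some member of P agrees with it on [0,1].\<close>

definition path_in_family :: "(real \<Rightarrow> 'b) set \<Rightarrow> (real \<Rightarrow> 'b) \<Rightarrow> bool" where
  "path_in_family P p \<longleftrightarrow> (\<exists>q\<in>P. \<forall>t\<in>{0..1}. q t = p t)"

definition P_connected :: "(real \<Rightarrow> 'b::topological_space) set \<Rightarrow> 'b set \<Rightarrow> bool" where
  "P_connected P Y \<longleftrightarrow>
     (\<forall>p\<in>P. path_in_family P (reversepath p)) \<and>
     (\<forall>x\<in>Y. \<forall>y\<in>Y. \<exists>p\<in>P. p 0 = x \<and> p 1 = y)"

definition locally_P_contractible :: "(real \<Rightarrow> 'b::topological_space) set \<Rightarrow> 'b set \<Rightarrow> bool" where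
  "locally_P_contractible P Y \<longleftrightarrow>
     (\<forall>y0\<in>Y. \<exists>U H. openin (top_of_set Y) U \<and> y0 \<in> U \<and>
        continuous_on (U \<times> {0..1::real}) H \<and> H ` (U \<times> {0..1}) \<subseteq> U \<and>
        (\<forall>t\<in>{0..1}. H (y0, t) = y0) \<and>
        (\<forall>y\<in>U. H (y, 0) = y0 \<and> H (y, 1) = y) \<and>
        (\<forall>y\<in>U. path_in_family P (\<lambda>t. H (y, t))))"

definition weakly_proper :: "'a::topological_space set \<Rightarrow> ('a \<Rightarrow> 'b::topological_space) \<Rightarrow> 'b set \<Rightarrow> bool" where
  "weakly_proper X f Y \<longleftrightarrow> continuous_on X f \<and> f ` X \<subseteq> Y \<and>
     (\<forall>K. compact K \<and> K \<subseteq> Y \<longrightarrow>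
        (\<forall>x \<in> X \<inter> f -` K. compact (connected_component_set (X \<inter> f -` K) x)))"

definition local_homeomorphism :: "'a::topological_space set \<Rightarrow> ('a \<Rightarrow> 'b::topological_space) \<Rightarrow> 'b set \<Rightarrow> bool" where
  "local_homeomorphism X f Y \<longleftrightarrow> continuous_on X f \<and> f ` X \<subseteq> Y \<and>
     (\<forall>x\<in>X. \<exists>T U g. x \<in> T \<and> openin (top_of_set X) T \<and> openin (top_of_set Y) U \<and>
        homeomorphism T U f g)"

end

theory Submission
  imports Defs
begin

lemma cont_local:
  assumes "\<And>y. y\<in>U \<Longrightarrow> \<exists>W. open W \<and> y \<in> W \<and> continuous_on (U \<inter> W) g"
  shows "continuous_on U g"
  unfolding continuous_on_topological
proof (intro ballI allI impI)
  fix x B assume xB: "x\<in>U" "open B" "g x \<in> B"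
  obtain W where W: "open W" "x\<in>W" "continuous_on (U\<inter>W) g" using assms[OF xB(1)] by auto
  have xUW: "x \<in> U \<inter> W" using xB W by simp
  have "\<exists>A. open A \<and> x\<in>A \<and> (\<forall>y\<in>U\<inter>W. y\<in>A \<longrightarrow> g y \<in> B)"
    using W(3) xUW xB(2,3) unfolding continuous_on_topological by simp
  then obtain A where A: "open A" "x\<in>A" "\<forall>y\<in>U\<inter>W. y\<in>A \<longrightarrow> g y \<in> B" by blast
  show "\<exists>A. open A \<and> x\<in>A \<and> (\<forall>y\<in>U. y\<in>A \<longrightarrow> g y \<in> B)"
    using A W by (intro exI[of _ "A\<inter>W"]) auto
qed

lemma lift_unique:
  fixes X :: "'a::metric_space set" and Y :: "'b::metric_space set"
  assumes lh: "local_homeomorphism X f Y" and S: "connected S"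
    and c1: "continuous_on S q1" and c2: "continuous_on S q2"
    and i1: "q1 ` S \<subseteq> X" and i2: "q2 ` S \<subseteq> X"
    and eq: "\<And>t. t\<in>S \<Longrightarrow> f (q1 t) = f (q2 t)" and a: "a\<in>S" "q1 a = q2 a"
    and t: "t \<in> S"
  shows "q1 t = q2 t"
proof -
  define E where "E = {t\<in>S. q1 t = q2 t}"
  have "closedin (top_of_set S) E"
  proof -
    have "closedin (top_of_set S) {t\<in>S. (\<lambda>t. dist (q1 t) (q2 t)) t = 0}"
      by (intro continuous_closedin_preimage_constant continuous_intros c1 c2)
    then show ?thesis by (simp add: E_def)
  qed
  moreover have "openin (top_of_set S) E"
    unfolding openin_subopen[of _ E]
  proof
    fix t assume "t\<in>E"
    then have t: "t\<in>S" "q1 t = q2 t" by (auto simp: E_def)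
    then have "q1 t \<in> X" using i1 by auto
    then obtain T V g where T: "q1 t \<in> T" "openin (top_of_set X) T" "openin (top_of_set Y) V" "homeomorphism T V f g"
      using lh unfolding local_homeomorphism_def by blast
    then obtain OT where OT: "open OT" "T = X \<inter> OT" by (auto simp: openin_open)
    define N where "N = (S \<inter> q1 -` OT) \<inter> (S \<inter> q2 -` OT)"
    have "openin (top_of_set S) N" unfolding N_def
      by (intro openin_Int continuous_openin_preimage_gen c1 c2 OT)
    moreover have "t \<in> N" using t T OT by (auto simp: N_def)
    moreover have "N \<subseteq> E"
    proof
      fix u assume "u\<in>N"
      then have u: "u\<in>S" "q1 u \<in> T" "q2 u \<in> T" using i1 i2 OT by (auto simp: N_def)
      have "q1 u = g (f (q1 u))" using T(4) u(2) by (simp add: homeomorphism_apply1)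
      also have "\<dots> = g (f (q2 u))" using eq u(1) by simp
      also have "\<dots> = q2 u" using T(4) u(3) by (simp add: homeomorphism_apply1)
      finally show "u\<in>E" using u(1) by (simp add: E_def)
    qed
    ultimately show "\<exists>N. openin (top_of_set S) N \<and> t\<in>N \<and> N \<subseteq> E" by blast
  qed
  moreover have "E \<noteq> {}" using a by (auto simp: E_def)
  ultimately have "E = S" using S unfolding connected_clopen by blast
  then show ?thesis using t by (auto simp: E_def)
qed

definition lift_on :: "'a::topological_space set \<Rightarrow> ('a \<Rightarrow> 'b) \<Rightarrow> (real \<Rightarrow> 'b) \<Rightarrow> real \<Rightarrow> real \<Rightarrow> (real \<Rightarrow> 'a) \<Rightarrow> bool" where
  "lift_on X f p a b q \<longleftrightarrow> continuous_on {a..b} q \<and> q ` {a..b} \<subseteq> X \<and> (\<forall>t\<in>{a..b}. f (q t) = p t)"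

lemma path_lift:
  fixes X :: "'a::metric_space set" and Y :: "'b::metric_space set"
  assumes lh: "local_homeomorphism X f Y" and wp: "weakly_proper X f Y"
    and p: "continuous_on {0..1} p" "p ` {0..1} \<subseteq> Y" and x: "x \<in> X" "f x = p 0"
  shows "\<exists>q. lift_on X f p 0 1 q \<and> q 0 = x"
proof -
  define K where "K = p ` {0..1}"
  have "compact K" unfolding K_def by (intro compact_continuous_image p) simp
  define C where "C = connected_component_set (X \<inter> f -` K) x"
  have "x \<in> X \<inter> f -` K" using x by (auto simp: K_def)
  then have "compact C" using wp \<open>compact K\<close> p(2) unfolding weakly_proper_def C_def K_def by blast
  have CX: "C \<subseteq> X" unfolding C_def using connected_component_subset by blast
  define A where "A = {t\<in>{0..1}. \<exists>q. lift_on X f p 0 t q \<and> q 0 = x}"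
  have inC: "q t \<in> C" if "lift_on X f p 0 t' q" "q 0 = x" "t \<in> {0..t'}" "t' \<le> 1" for q t t'
  proof -
    have "q ` {0..t'} \<subseteq> C" unfolding C_def
    proof (rule connected_component_maximal)
      show "x \<in> q ` {0..t'}" using that(2,3) by (metis atLeastAtMost_iff image_eqI order_refl order_trans)
      show "connected (q ` {0..t'})" using that(1) by (intro connected_continuous_image) (auto simp: lift_on_def)
      show "q ` {0..t'} \<subseteq> X \<inter> f -` K" using that(1,4) by (auto simp: lift_on_def K_def)
    qed
    then show ?thesis using that(3) by auto
  qed
  have "0 \<in> A" using x unfolding A_def lift_on_def by (intro CollectI conjI exI[of _ "\<lambda>_. x"]) auto
  have bdd: "bdd_above A" unfolding A_def by (auto intro: bdd_aboveI[of _ 1])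
  define s where "s = Sup A"
  have s0: "0 \<le> s" using cSup_upper[OF \<open>0\<in>A\<close> bdd] s_def by simp
  have s1: "s \<le> 1" unfolding s_def
  proof (rule cSup_least)
    show "A \<noteq> {}" using \<open>0\<in>A\<close> by blast
  qed (auto simp: A_def)
  have "\<forall>n. \<exists>t q. t \<in> A \<and> s - inverse (real (Suc n)) < t \<and> lift_on X f p 0 t q \<and> q 0 = x"
  proof
    fix n
    have "s - inverse (real (Suc n)) < Sup A" unfolding s_def by simp
    then obtain t where "t\<in>A" "s - inverse (real (Suc n)) < t"
      using less_cSup_iff[OF _ bdd] \<open>0\<in>A\<close> by blast
    then show "\<exists>t q. t \<in> A \<and> s - inverse (real (Suc n)) < t \<and> lift_on X f p 0 t q \<and> q 0 = x"
      by (auto simp: A_def)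
  qed
  then obtain tt qq where tq: "\<And>n. tt n \<in> A" "\<And>n. s - inverse (real (Suc n)) < tt n"
     "\<And>n. lift_on X f p 0 (tt n) (qq n)" "\<And>n. qq n 0 = x" by metis
  have ttle: "tt n \<le> s" for n unfolding s_def using tq(1) bdd by (rule cSup_upper)
  have tt01: "tt n \<in> {0..1}" for n using tq(1)[of n] by (simp add: A_def)
  have tt_lim: "tt \<longlonglongrightarrow> s"
  proof -
    have e1: "\<forall>\<^sub>F n in sequentially. s - inverse (real (Suc n)) \<le> tt n"
      by (intro always_eventually allI less_imp_le tq(2))
    have e2: "\<forall>\<^sub>F n in sequentially. tt n \<le> s" by (intro always_eventually allI ttle)
    have l1: "(\<lambda>n. s - inverse (real (Suc n))) \<longlonglongrightarrow> s"
      using tendsto_diff[OF tendsto_const LIMSEQ_inverse_real_of_nat, of s] by simp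
    show ?thesis by (rule tendsto_sandwich[OF e1 e2 l1 tendsto_const])
  qed
  have zC: "qq n (tt n) \<in> C" for n using inC[OF tq(3) tq(4), of "tt n"] tt01[of n] by auto
  obtain z r where zr: "z\<in>C" "strict_mono r" "((\<lambda>n. qq n (tt n)) \<circ> r) \<longlonglongrightarrow> z"
    using compact_imp_seq_compact[OF \<open>compact C\<close>] zC unfolding seq_compact_def by metis
  have zX: "z \<in> X" using zr CX by auto
  have ttr: "(\<lambda>n. tt (r n)) \<longlonglongrightarrow> s" using LIMSEQ_subseq_LIMSEQ[OF tt_lim zr(2)] by (simp add: comp_def)
  have zlim: "(\<lambda>n. qq (r n) (tt (r n))) \<longlonglongrightarrow> z" using zr(3) by (simp add: comp_def)
  have fcont: "continuous_on X f" using lh by (simp add: local_homeomorphism_def)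
  have "f z = p s"
  proof -
    have ev: "\<forall>\<^sub>F n in sequentially. qq (r n) (tt (r n)) \<in> X"
      using zC CX by (intro always_eventually allI) blast
    have l1: "(\<lambda>n. f (qq (r n) (tt (r n)))) \<longlonglongrightarrow> f z"
      by (rule continuous_on_tendsto_compose[OF fcont zlim zX ev])
    have e: "(\<lambda>n. f (qq (r n) (tt (r n)))) = (\<lambda>n. p (tt (r n)))"
      using tq(3) tt01 by (auto simp: lift_on_def)
    have ev2: "\<forall>\<^sub>F n in sequentially. tt (r n) \<in> {0..1}"
      by (intro always_eventually allI tt01)
    have l2: "(\<lambda>n. p (tt (r n))) \<longlonglongrightarrow> p s"
      by (rule continuous_on_tendsto_compose[OF p(1) ttr _ ev2]) (use s0 s1 in auto)
    have l3: "(\<lambda>n. p (tt (r n))) \<longlonglongrightarrow> f z" using l1 unfolding e .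
    show ?thesis by (rule LIMSEQ_unique[OF l3 l2])
  qed
  obtain T V g where T: "z \<in> T" "openin (top_of_set X) T" "openin (top_of_set Y) V" "homeomorphism T V f g"
    using lh zX unfolding local_homeomorphism_def by blast
  obtain OT where OT: "open OT" "T = X \<inter> OT" using T(2) by (auto simp: openin_open)
  obtain OV where OV: "open OV" "V = Y \<inter> OV" using T(3) by (auto simp: openin_open)
  have psV: "p s \<in> V" using T(1,4) \<open>f z = p s\<close> by (metis homeomorphism_image1 image_eqI)
  have "openin (top_of_set {0..1}) ({0..1} \<inter> p -` OV)"
    by (rule continuous_openin_preimage_gen[OF p(1) OV(1)])
  then obtain \<delta> where \<delta>: "\<delta> > 0" "\<forall>t\<in>{0..1}. dist t s < \<delta> \<longrightarrow> p t \<in> OV"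
    unfolding openin_euclidean_subtopology_iff using psV OV s0 s1 by force
  have "\<forall>\<^sub>F n in sequentially. qq (r n) (tt (r n)) \<in> OT \<and> s - \<delta>/2 < tt (r n)"
    using topological_tendstoD[OF zlim OT(1)] order_tendstoD(1)[OF ttr, of "s - \<delta>/2"] T(1) OT \<delta>(1)
    by (auto intro: eventually_conj)
  then obtain N0 where "\<forall>n\<ge>N0. qq (r n) (tt (r n)) \<in> OT \<and> s - \<delta>/2 < tt (r n)"
    unfolding eventually_sequentially by blast
  then obtain N where N: "qq (r N) (tt (r N)) \<in> OT" "s - \<delta>/2 < tt (r N)" by blast
  define t1 where "t1 = tt (r N)"
  define q1 where "q1 = qq (r N)"
  have q1: "lift_on X f p 0 t1 q1" "q1 0 = x" "q1 t1 \<in> T" "t1 \<le> s" "t1 \<ge> 0"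
    using tq(3,4) N(1) zC CX OT ttle tt01 unfolding t1_def q1_def by auto
  define s' where "s' = min (s + \<delta>/2) 1"
  define q' where "q' = (\<lambda>t. if t \<le> t1 then q1 t else g (p t))"
  have pV: "p t \<in> V" if "t \<in> {t1..s'}" for t
  proof -
    have "t \<in> {0..1}" "dist t s < \<delta>" using that q1(5) N(2) \<delta>(1) unfolding s'_def t1_def dist_real_def
      by auto
    then show ?thesis using \<delta>(2) p(2) OV by auto
  qed
  have gcont: "continuous_on V g" and gV: "g ` V = T" and TX: "T \<subseteq> X"
    using T(4) OT unfolding homeomorphism_def by auto
  have agree: "g (p t1) = q1 t1"
    using q1(1,3,5) T(4) unfolding lift_on_def by (metis atLeastAtMost_iff homeomorphism_apply1 order_refl)
  have "lift_on X f p 0 s' q'"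
    unfolding lift_on_def
  proof (intro conjI ballI)
    have u: "{0..s'} = {0..t1} \<union> {t1..s'}" using q1(4,5) s0 s1 \<delta>(1) unfolding s'_def by auto
    have c1: "continuous_on {0..t1} q'"
    proof (rule continuous_on_eq)
      show "continuous_on {0..t1} q1" using q1(1) by (simp add: lift_on_def)
    qed (auto simp: q'_def)
    have "continuous_on {t1..s'} (g \<circ> p)"
      by (rule continuous_on_compose[OF continuous_on_subset[OF p(1)] continuous_on_subset[OF gcont]])
        (use q1(5) pV s1 s'_def in auto)
    then have c2: "continuous_on {t1..s'} q'"
      by (rule continuous_on_eq) (auto simp: q'_def agree)
    show "continuous_on {0..s'} q'" unfolding u by (rule continuous_on_closed_Un[OF _ _ c1 c2]) auto
    show "q' ` {0..s'} \<subseteq> X"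
    proof
      fix w assume "w \<in> q' ` {0..s'}"
      then obtain t where t: "t \<in> {0..s'}" "w = q' t" by auto
      show "w \<in> X"
      proof (cases "t \<le> t1")
        case True then show ?thesis using t q1(1) by (auto simp: q'_def lift_on_def)
      next
        case False then have "p t \<in> V" using t pV by auto
        then show ?thesis using t False gV TX by (auto simp: q'_def)
      qed
    qed
    fix t assume t: "t \<in> {0..s'}"
    show "f (q' t) = p t"
    proof (cases "t \<le> t1")
      case True then show ?thesis using t q1(1) by (auto simp: q'_def lift_on_def)
    next
      case False then have "p t \<in> V" using t pV by auto
      then show ?thesis using False T(4) by (simp add: q'_def homeomorphism_apply2)
    qed
  qed
  moreover have "q' 0 = x" using q1 by (simp add: q'_def)
  moreover have "s' \<in> {0..1}" using s0 \<delta>(1) unfolding s'_def by auto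
  ultimately have "s' \<in> A" unfolding A_def by blast
  then have "s' \<le> s" unfolding s_def using bdd by (rule cSup_upper)
  then have "s' = 1" using \<delta>(1) s1 unfolding s'_def by auto
  then show ?thesis using \<open>lift_on X f p 0 s' q'\<close> \<open>q' 0 = x\<close> by auto
qed



lemma pair_dist_lt:
  fixes y y1 :: "'b::metric_space" and t s d :: real
  assumes "dist y y1 < d" "\<bar>t - s\<bar> \<le> d"
  shows "dist (y,t) (y1,s) < 2*d"
proof -
  have "dist (y,t) (y1,s) = sqrt ((dist y y1)\<^sup>2 + (dist t s)\<^sup>2)" by (rule dist_Pair_Pair)
  also have "\<dots> \<le> \<bar>dist y y1\<bar> + \<bar>dist t s\<bar>" by (rule sqrt_sum_squares_le_sum_abs)
  also have "\<dots> < 2*d" using assms by (simp add: dist_real_def)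
  finally show ?thesis .
qed

lemma lift_cont:
  fixes X :: "'a::metric_space set" and Y :: "'b::metric_space set" and U :: "'b set"
  assumes lh: "local_homeomorphism X f Y"
    and H: "continuous_on (U \<times> {0..1}) H" "H ` (U \<times> {0..1}) \<subseteq> Y"
    and x0: "x0 \<in> X"
    and L: "\<And>y. y \<in> U \<Longrightarrow> lift_on X f (\<lambda>t. H (y,t)) 0 1 (L y) \<and> L y 0 = x0"
  shows "continuous_on U (\<lambda>y. L y 1)"
proof (rule cont_local)
  fix y1 assume y1: "y1 \<in> U"
  define G where "G = (\<lambda>z. L (fst z) (snd z))"
  have Ly: "continuous_on {0..1} (L y)" "L y ` {0..1} \<subseteq> X" "\<And>t. t\<in>{0..1} \<Longrightarrow> f (L y t) = H (y,t)" "L y 0 = x0"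
    if "y \<in> U" for y
    using L[OF that] unfolding lift_on_def by auto
  define A where "A = {t\<in>{0..1}. \<exists>W. open W \<and> y1 \<in> W \<and> continuous_on ((U\<inter>W) \<times> {0..t}) G}"
  have "0 \<in> A" unfolding A_def
  proof (intro CollectI conjI exI[of _ UNIV])
    show "continuous_on ((U \<inter> UNIV) \<times> {0..0}) G"
    proof (rule continuous_on_eq[OF continuous_on_const[of _ x0]])
      fix z assume "z \<in> (U \<inter> UNIV) \<times> {0..(0::real)}"
      then show "x0 = G z" using Ly(4) by (auto simp: G_def)
    qed
  qed auto
  have bdd: "bdd_above A" unfolding A_def by (auto intro: bdd_aboveI[of _ 1])
  define s where "s = Sup A"
  have s0: "0 \<le> s" using cSup_upper[OF \<open>0\<in>A\<close> bdd] s_def by simp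
  have s1: "s \<le> 1" unfolding s_def
  proof (rule cSup_least)
    show "A \<noteq> {}" using \<open>0\<in>A\<close> by blast
  qed (auto simp: A_def)
  define z where "z = L y1 s"
  have zX: "z \<in> X" using Ly(2)[OF y1] s0 s1 by (auto simp: z_def)
  obtain T V g where T: "z \<in> T" "openin (top_of_set X) T" "openin (top_of_set Y) V" "homeomorphism T V f g"
    using lh zX unfolding local_homeomorphism_def by blast
  obtain OT where OT: "open OT" "T = X \<inter> OT" using T(2) by (auto simp: openin_open)
  obtain OV where OV: "open OV" "V = Y \<inter> OV" using T(3) by (auto simp: openin_open)
  have gcont: "continuous_on V g" and gV: "g ` V = T" and TX: "T \<subseteq> X" and fT: "f ` T = V"
    using T(4) OT unfolding homeomorphism_def by auto
  have Hz: "H (y1,s) \<in> OV"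
  proof -
    have "f z \<in> V" using T(1) fT by auto
    moreover have "f z = H (y1,s)" using Ly(3)[OF y1, of s] s0 s1 by (simp add: z_def)
    ultimately show ?thesis using OV by auto
  qed
  have "openin (top_of_set {0..1}) ({0..1} \<inter> L y1 -` OT)"
    by (rule continuous_openin_preimage_gen[OF Ly(1)[OF y1] OT(1)])
  moreover have "s \<in> {0..1} \<inter> L y1 -` OT" using s0 s1 T(1) OT by (auto simp: z_def)
  ultimately obtain \<delta>1 where \<delta>1: "\<delta>1 > 0" "\<forall>t\<in>{0..1}. dist t s < \<delta>1 \<longrightarrow> L y1 t \<in> OT"
    unfolding openin_euclidean_subtopology_iff by force
  have "openin (top_of_set (U \<times> {0..1})) ((U \<times> {0..1}) \<inter> H -` OV)"
    by (rule continuous_openin_preimage_gen[OF H(1) OV(1)])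
  moreover have "(y1,s) \<in> (U \<times> {0..1}) \<inter> H -` OV" using s0 s1 y1 Hz by auto
  ultimately obtain \<delta>2 where \<delta>2: "\<delta>2 > 0" "\<forall>w\<in>U \<times> {0..1}. dist w (y1,s) < \<delta>2 \<longrightarrow> H w \<in> OV"
    unfolding openin_euclidean_subtopology_iff by force
  define d where "d = min \<delta>1 \<delta>2 / 2"
  have d: "d > 0" "d < \<delta>1" "2*d \<le> \<delta>2" using \<delta>1 \<delta>2 by (auto simp: d_def)
  have HV: "H (y,t) \<in> V" if "y \<in> U" "dist y y1 < d" "t \<in> {0..1}" "\<bar>t - s\<bar> \<le> d" for y t
  proof -
    have "dist (y,t) (y1,s) < \<delta>2" using pair_dist_lt[OF that(2,4)] d by linarith
    then have "H (y,t) \<in> OV" using \<delta>2(2) that by auto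
    moreover have "H (y,t) \<in> Y" using H(2) that by auto
    ultimately show ?thesis using OV by auto
  qed
  have "s - d < Sup A" unfolding s_def using d by simp
  then obtain t1 where t1: "t1 \<in> A" "s - d < t1" using less_cSup_iff[OF _ bdd] \<open>0\<in>A\<close> by blast
  have t1s: "t1 \<le> s" unfolding s_def using t1(1) bdd by (rule cSup_upper)
  have t101: "t1 \<in> {0..1}" using t1(1) by (simp add: A_def)
  obtain W0 where W0: "open W0" "y1 \<in> W0" "continuous_on ((U\<inter>W0) \<times> {0..t1}) G"
    using t1(1) unfolding A_def by blast
  have Lt1: "L y1 t1 \<in> OT" using \<delta>1(2) t101 t1 t1s d by (auto simp: dist_real_def)
  have "continuous_on (U\<inter>W0) (\<lambda>y. L y t1)"
  proof -
    have "continuous_on (U\<inter>W0) (G \<circ> (\<lambda>y. (y,t1)))"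
      by (rule continuous_on_compose[OF _ continuous_on_subset[OF W0(3)]])
        (use t101 in \<open>auto intro!: continuous_intros\<close>)
    then show ?thesis by (simp add: G_def comp_def)
  qed
  then have "openin (top_of_set (U\<inter>W0)) ((U\<inter>W0) \<inter> (\<lambda>y. L y t1) -` OT)"
    using OT(1) by (rule continuous_openin_preimage_gen)
  then obtain W2 where W2: "open W2" "(U\<inter>W0) \<inter> (\<lambda>y. L y t1) -` OT = (U\<inter>W0) \<inter> W2"
    by (auto simp: openin_open)
  have y1W2: "y1 \<in> W2" using W2(2) y1 W0(2) Lt1 by blast
  define W where "W = W0 \<inter> W2 \<inter> ball y1 d"
  have W: "open W" "y1 \<in> W" using W0 W2 y1W2 d by (auto simp: W_def)
  define s' where "s' = min (s + d) 1"
  have s'1: "t1 \<le> s'" "s' \<le> 1" "s' \<ge> 0" using t1s t101 s0 d unfolding s'_def by auto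
  have tin: "t \<in> {0..1}" "\<bar>t - s\<bar> \<le> d" if "t \<in> {t1..s'}" for t
    using that t1 t101 s'1 unfolding s'_def by auto
  have yW: "y \<in> U" "dist y y1 < d" "L y t1 \<in> T" if "y \<in> U \<inter> W" for y
  proof -
    show "y \<in> U" "dist y y1 < d" using that by (auto simp: W_def dist_commute)
    have "y \<in> (U\<inter>W0) \<inter> W2" using that by (auto simp: W_def)
    then have "L y t1 \<in> OT" using W2(2) by blast
    moreover have "L y t1 \<in> X" using Ly(2)[OF \<open>y\<in>U\<close>] t101 by auto
    ultimately show "L y t1 \<in> T" using OT by auto
  qed
  have key: "L y t = g (H (y,t))" if y: "y \<in> U \<inter> W" and t: "t \<in> {t1..s'}" for y t
  proof (rule lift_unique[OF lh, of "{t1..s'}" "L y" "\<lambda>t. g (H (y,t))" t1 t])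
    have yU: "y \<in> U" using yW[OF y] by simp
    have sub: "{t1..s'} \<subseteq> {0..1}" using t101 s'1 by auto
    have HVy: "H (y,u) \<in> V" if "u \<in> {t1..s'}" for u using HV[OF yU yW(2)[OF y] tin[OF that]] .
    show "connected {t1..s'}" by simp
    show "continuous_on {t1..s'} (L y)" by (rule continuous_on_subset[OF Ly(1)[OF yU] sub])
    have "continuous_on {t1..s'} (g \<circ> (\<lambda>u. H (y,u)))"
    proof (rule continuous_on_compose[OF _ continuous_on_subset[OF gcont]])
      show "continuous_on {t1..s'} (\<lambda>u. H (y, u))"
        by (rule continuous_on_compose2[OF H(1)]) (use yU sub in \<open>auto intro!: continuous_intros\<close>)
      show "(\<lambda>u. H (y, u)) ` {t1..s'} \<subseteq> V" using HVy by auto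
    qed
    then show "continuous_on {t1..s'} (\<lambda>t. g (H (y,t)))" by (simp add: comp_def)
    show "L y ` {t1..s'} \<subseteq> X" using Ly(2)[OF yU] sub by auto
    show "(\<lambda>t. g (H (y,t))) ` {t1..s'} \<subseteq> X" using HVy gV TX by auto
    show "f (L y u) = f (g (H (y,u)))" if "u \<in> {t1..s'}" for u
      using Ly(3)[OF yU, of u] sub that HVy[OF that] T(4) by (auto simp: homeomorphism_apply2)
    show "t1 \<in> {t1..s'}" using s'1 by simp
    have "f (L y t1) = H (y,t1)" using Ly(3)[OF yU] t101 by simp
    then show "L y t1 = g (H (y,t1))" using yW(3)[OF y] T(4) by (metis homeomorphism_apply1)
  qed (use t in simp)
  have c2: "continuous_on ((U\<inter>W) \<times> {t1..s'}) G"
  proof -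
    have "continuous_on ((U\<inter>W) \<times> {t1..s'}) (g \<circ> H)"
    proof (rule continuous_on_compose[OF continuous_on_subset[OF H(1)] continuous_on_subset[OF gcont]])
      show "(U \<inter> W) \<times> {t1..s'} \<subseteq> U \<times> {0..1}" using t101 s'1 by auto
      show "H ` ((U \<inter> W) \<times> {t1..s'}) \<subseteq> V"
      proof
        fix w assume "w \<in> H ` ((U \<inter> W) \<times> {t1..s'})"
        then obtain y t where "y \<in> U \<inter> W" "t \<in> {t1..s'}" "w = H (y,t)" by auto
        then show "w \<in> V" using HV yW tin by blast
      qed
    qed
    then show ?thesis
    proof (rule continuous_on_eq)
      fix w assume "w \<in> (U\<inter>W) \<times> {t1..s'}"
      then show "(g \<circ> H) w = G w" using key by (auto simp: G_def)
    qed
  qed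
  have c1: "continuous_on ((U\<inter>W) \<times> {0..t1}) G"
    by (rule continuous_on_subset[OF W0(3)]) (auto simp: W_def)
  define M where "M = (U\<inter>W) \<times> {0..s'}"
  have Mu: "M = (U\<inter>W) \<times> {0..t1} \<union> (U\<inter>W) \<times> {t1..s'}" using s'1 t101 by (auto simp: M_def)
  have cl1: "closedin (top_of_set M) ((U\<inter>W) \<times> {0..t1})"
  proof -
    have "closedin (top_of_set M) (M \<inter> (UNIV \<times> {0..t1}))"
      by (intro closedin_closed_Int closed_Times closed_UNIV closed_atLeastAtMost)
    moreover have "M \<inter> (UNIV \<times> {0..t1}) = (U\<inter>W) \<times> {0..t1}" using s'1 by (auto simp: M_def)
    ultimately show ?thesis by simp
  qed
  have cl2: "closedin (top_of_set M) ((U\<inter>W) \<times> {t1..s'})"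
  proof -
    have "closedin (top_of_set M) (M \<inter> (UNIV \<times> {t1..s'}))"
      by (intro closedin_closed_Int closed_Times closed_UNIV closed_atLeastAtMost)
    moreover have "M \<inter> (UNIV \<times> {t1..s'}) = (U\<inter>W) \<times> {t1..s'}" using s'1 t101 by (auto simp: M_def)
    ultimately show ?thesis by simp
  qed
  have "continuous_on M G"
    using continuous_on_Un_local[OF cl1[unfolded Mu] cl2[unfolded Mu] c1 c2] Mu by simp
  then have "s' \<in> A" using W s'1 unfolding A_def M_def by (intro CollectI conjI exI[of _ W]) auto
  then have "s' \<le> s" unfolding s_def using bdd by (rule cSup_upper)
  then have "s' = 1" using d s1 unfolding s'_def by auto
  then have cM: "continuous_on ((U\<inter>W) \<times> {0..1}) G" using \<open>continuous_on M G\<close> by (simp add: M_def)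
  have "continuous_on (U\<inter>W) (G \<circ> (\<lambda>y. (y,1)))"
    by (rule continuous_on_compose[OF _ continuous_on_subset[OF cM]])
      (auto intro!: continuous_intros)
  then have "continuous_on (U\<inter>W) (\<lambda>y. L y 1)" by (simp add: G_def comp_def)
  then show "\<exists>W. open W \<and> y1 \<in> W \<and> continuous_on (U \<inter> W) (\<lambda>y. L y 1)" using W by blast
qed



theorem mainTheorem4:
  fixes X :: "'a::metric_space set" and Y :: "'b::metric_space set"
    and P :: "(real \<Rightarrow> 'b) set" and f :: "'a \<Rightarrow> 'b"
  assumes "\<forall>p\<in>P. path p \<and> path_image p \<subseteq> Y"
    and "P_connected P Y"
    and "locally_P_contractible P Y"
    and "X \<noteq> {}"
    and "local_homeomorphism X f Y"
    and "weakly_proper X f Y"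
  shows "covering_space X f Y"
proof -
  have lh: "local_homeomorphism X f Y" and wp: "weakly_proper X f Y" using assms(5,6) .
  have fcont: "continuous_on X f" and fXY: "f ` X \<subseteq> Y" using lh by (auto simp: local_homeomorphism_def)
  have lift: "\<exists>q. lift_on X f p 0 1 q \<and> q 0 = x"
    if "continuous_on {0..1} p" "p ` {0..1} \<subseteq> Y" "x \<in> X" "f x = p 0" for p x
    by (rule path_lift[OF lh wp that])
  have uniq01: "q1 t = q2 t"
    if "lift_on X f p 0 1 q1" "lift_on X f p 0 1 q2" "a \<in> {0..1}" "q1 a = q2 a" "t \<in> {0..1}" for p q1 q2 a t
  proof (rule lift_unique[OF lh, of "{0..1}" q1 q2 a t])
    show "connected {0..1::real}" by simp
    show "continuous_on {0..1} q1" "continuous_on {0..1} q2" "q1 ` {0..1} \<subseteq> X" "q2 ` {0..1} \<subseteq> X"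
      using that(1,2) by (auto simp: lift_on_def)
    show "f (q1 u) = f (q2 u)" if "u \<in> {0..1}" for u using that \<open>lift_on X f p 0 1 q1\<close> \<open>lift_on X f p 0 1 q2\<close>
      by (auto simp: lift_on_def)
  qed (use that in auto)
  show ?thesis
  proof (rule covering_spaceI)
    show "continuous_on X f" by (rule fcont)
    show "f ` X = Y"
    proof
      show "f ` X \<subseteq> Y" by (rule fXY)
      show "Y \<subseteq> f ` X"
      proof
        fix y assume y: "y \<in> Y"
        obtain x0 where x0: "x0 \<in> X" using assms(4) by blast
        have fx0: "f x0 \<in> Y" using x0 fXY by auto
        have "\<exists>p\<in>P. p 0 = f x0 \<and> p 1 = y" using assms(2) fx0 y unfolding P_connected_def by blast
        then obtain p where p: "p \<in> P" "p 0 = f x0" "p 1 = y" by blast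
        have "path p" "path_image p \<subseteq> Y" using assms(1) p(1) by auto
        then have "continuous_on {0..1} p" "p ` {0..1} \<subseteq> Y" by (auto simp: path_def path_image_def)
        then obtain q where q: "lift_on X f p 0 1 q" "q 0 = x0" using lift x0 p(2) by metis
        have "q 1 \<in> X" "f (q 1) = p 1" using q(1) by (auto simp: lift_on_def)
        then show "y \<in> f ` X" using p(3) by (metis image_eqI)
      qed
    qed
    fix y0 assume y0: "y0 \<in> Y"
    have "\<exists>U H. openin (top_of_set Y) U \<and> y0 \<in> U \<and>
        continuous_on (U \<times> {0..1::real}) H \<and> H ` (U \<times> {0..1}) \<subseteq> U \<and>
        (\<forall>t\<in>{0..1}. H (y0, t) = y0) \<and>
        (\<forall>y\<in>U. H (y, 0) = y0 \<and> H (y, 1) = y) \<and>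
        (\<forall>y\<in>U. path_in_family P (\<lambda>t. H (y, t)))"
      using assms(3) y0 unfolding locally_P_contractible_def by (rule bspec)
    then obtain U H where UH: "openin (top_of_set Y) U" "y0 \<in> U" "continuous_on (U \<times> {0..1::real}) H"
      "H ` (U \<times> {0..1}) \<subseteq> U" "\<forall>t\<in>{0..1}. H (y0, t) = y0" "\<forall>y\<in>U. H (y, 0) = y0 \<and> H (y, 1) = y"
      by blast
    have UY: "U \<subseteq> Y" using UH(1) by (rule openin_imp_subset)
    have HY: "H ` (U \<times> {0..1}) \<subseteq> Y" using UH(4) UY by auto
    have Hc: "continuous_on {0..1} (\<lambda>t. H (y,t))" if "y \<in> U" for y
      by (rule continuous_on_compose2[OF UH(3)]) (use that in \<open>auto intro!: continuous_intros\<close>)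
    have Hi: "(\<lambda>t. H (y,t)) ` {0..1} \<subseteq> Y" if "y \<in> U" for y using HY that by auto
    have H0: "H (y,0) = y0" and H1: "H (y,1) = y" if "y \<in> U" for y using UH(6) that by auto
    define Lx where "Lx x y = (SOME q. lift_on X f (\<lambda>t. H (y,t)) 0 1 q \<and> q 0 = x)" for x y
    have Lx: "lift_on X f (\<lambda>t. H (y,t)) 0 1 (Lx x y) \<and> Lx x y 0 = x" if "x \<in> X" "f x = y0" "y \<in> U" for x y
    proof -
      have "\<exists>q. lift_on X f (\<lambda>t. H (y,t)) 0 1 q \<and> q 0 = x"
        by (rule lift[OF Hc[OF that(3)] Hi[OF that(3)] that(1)]) (simp add: H0[OF that(3)] that(2))
      from someI_ex[OF this] show ?thesis unfolding Lx_def .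
    qed
    define gx where "gx x y = Lx x y 1" for x y
    have gcont: "continuous_on U (gx x)" if "x \<in> X" "f x = y0" for x
    proof -
      have "continuous_on U (\<lambda>y. Lx x y 1)"
        by (rule lift_cont[OF lh UH(3) HY that(1)]) (rule Lx[OF that])
      then show ?thesis by (simp add: gx_def)
    qed
    have gX: "gx x y \<in> X" and gf: "f (gx x y) = y" if "x \<in> X" "f x = y0" "y \<in> U" for x y
      using Lx[OF that] H1[OF that(3)] by (auto simp: gx_def lift_on_def)
    have ginj: "x1 = x2" if "x1 \<in> X" "f x1 = y0" "x2 \<in> X" "f x2 = y0" "y \<in> U" "gx x1 y = gx x2 y" for x1 x2 y
    proof -
      have "Lx x1 y 0 = Lx x2 y 0"
        by (rule uniq01[OF conjunct1[OF Lx[OF that(1,2,5)]] conjunct1[OF Lx[OF that(3,4,5)]], of 1])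
          (use that(6) in \<open>auto simp: gx_def\<close>)
      then show ?thesis using Lx[OF that(1,2,5)] Lx[OF that(3,4,5)] by simp
    qed
    define v where "v = (\<lambda>x. gx x ` U) ` (X \<inter> f -` {y0})"
    show "\<exists>T. y0 \<in> T \<and> openin (top_of_set Y) T \<and>
             (\<exists>v. \<Union>v = X \<inter> f -` T \<and> (\<forall>u \<in> v. openin (top_of_set X) u) \<and>
             pairwise disjnt v \<and> (\<forall>u \<in> v. \<exists>q. homeomorphism u T f q))"
    proof (intro exI conjI)
      show "y0 \<in> U" "openin (top_of_set Y) U" using UH(1,2) by auto
      show "\<Union>v = X \<inter> f -` U"
      proof
        show "\<Union>v \<subseteq> X \<inter> f -` U" unfolding v_def using gX gf by auto
        show "X \<inter> f -` U \<subseteq> \<Union>v"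
        proof
          fix x' assume x': "x' \<in> X \<inter> f -` U"
          define y where "y = f x'"
          have yU: "y \<in> U" using x' by (simp add: y_def)
          define r where "r = (\<lambda>t. H (y, 1 - t))"
          have rc: "continuous_on {0..1} r" unfolding r_def
            by (rule continuous_on_compose2[OF UH(3)]) (use yU in \<open>auto intro!: continuous_intros\<close>)
          have ri: "r ` {0..1} \<subseteq> Y" unfolding r_def using HY yU by auto
          have "f x' = r 0" using H1[OF yU] by (simp add: r_def y_def)
          then obtain q where q: "lift_on X f r 0 1 q" "q 0 = x'" using lift[OF rc ri] x' by blast
          define x where "x = q 1"
          have xX: "x \<in> X" and fx: "f x = y0" using q(1) H0[OF yU] by (auto simp: lift_on_def x_def r_def)
          have qr: "lift_on X f (\<lambda>t. H (y,t)) 0 1 (\<lambda>t. q (1 - t))"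
            unfolding lift_on_def
          proof (intro conjI ballI)
            show "continuous_on {0..1} (\<lambda>t. q (1 - t))"
              by (rule continuous_on_compose2[of "{0..1}" q]) (use q(1) in \<open>auto simp: lift_on_def intro!: continuous_intros\<close>)
            show "(\<lambda>t. q (1 - t)) ` {0..1} \<subseteq> X" using q(1) by (auto simp: lift_on_def)
            fix t :: real assume "t \<in> {0..1}"
            then show "f (q (1 - t)) = H (y, t)" using q(1) by (auto simp: lift_on_def r_def)
          qed
          have "Lx x y 1 = q (1 - 1)"
            by (rule uniq01[OF conjunct1[OF Lx[OF xX fx yU]] qr, of 0])
              (use Lx[OF xX fx yU] in \<open>auto simp: x_def\<close>)
          then have "gx x y = x'" using q(2) by (simp add: gx_def)
          then show "x' \<in> \<Union>v" unfolding v_def using xX fx yU by blast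
        qed
      qed
      show "\<forall>u\<in>v. openin (top_of_set X) u"
      proof
        fix u assume "u \<in> v"
        then obtain x where x: "x \<in> X" "f x = y0" and u: "u = gx x ` U" by (auto simp: v_def)
        show "openin (top_of_set X) u"
          unfolding openin_subopen[of _ u]
        proof
          fix x' assume "x' \<in> u"
          then obtain y where y: "y \<in> U" "x' = gx x y" using u by auto
          have x'X: "x' \<in> X" using gX[OF x y(1)] y(2) by simp
          obtain T' V' h where T': "x' \<in> T'" "openin (top_of_set X) T'" "openin (top_of_set Y) V'" "homeomorphism T' V' f h"
            using lh x'X unfolding local_homeomorphism_def by blast
          obtain OT where OT: "open OT" "T' = X \<inter> OT" using T'(2) by (auto simp: openin_open)
          define M where "M = U \<inter> gx x -` OT"
          have "openin (top_of_set U) M" unfolding M_def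
            by (rule continuous_openin_preimage_gen[OF gcont[OF x] OT(1)])
          then have "openin (top_of_set Y) M" using UH(1) by (rule openin_trans)
          then obtain OM where OM: "open OM" "M = Y \<inter> OM" by (auto simp: openin_open)
          define N where "N = (X \<inter> f -` OM) \<inter> T'"
          have "openin (top_of_set X) N" unfolding N_def
            by (intro openin_Int continuous_openin_preimage_gen[OF fcont OM(1)] T'(2))
          moreover have "x' \<in> N"
          proof -
            have "f x' = y" using gf[OF x y(1)] y(2) by simp
            moreover have "y \<in> M" using y T'(1) OT by (auto simp: M_def)
            ultimately show ?thesis using OM x'X T'(1) by (auto simp: N_def)
          qed
          moreover have "N \<subseteq> u"
          proof
            fix w assume w: "w \<in> N"
            then have wX: "w \<in> X" "w \<in> T'" "f w \<in> OM" by (auto simp: N_def)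
            then have "f w \<in> M" using OM fXY by auto
            then have fwU: "f w \<in> U" and gOT: "gx x (f w) \<in> OT" by (auto simp: M_def)
            have gT: "gx x (f w) \<in> T'" using gOT gX[OF x fwU] OT by auto
            have "w = h (f w)" using T'(4) wX(2) by (simp add: homeomorphism_apply1)
            also have "\<dots> = h (f (gx x (f w)))" using gf[OF x fwU] by simp
            also have "\<dots> = gx x (f w)" using T'(4) gT by (simp add: homeomorphism_apply1)
            finally show "w \<in> u" using u fwU by auto
          qed
          ultimately show "\<exists>N. openin (top_of_set X) N \<and> x' \<in> N \<and> N \<subseteq> u" by blast
        qed
      qed
      show "pairwise disjnt v"
        unfolding pairwise_def disjnt_def
      proof (intro ballI impI)
        fix u1 u2 assume u12: "u1 \<in> v" "u2 \<in> v" "u1 \<noteq> u2"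
        then obtain x1 x2 where x1: "x1 \<in> X" "f x1 = y0" "u1 = gx x1 ` U"
          and x2: "x2 \<in> X" "f x2 = y0" "u2 = gx x2 ` U" by (auto simp: v_def)
        show "u1 \<inter> u2 = {}"
        proof (rule ccontr)
          assume "u1 \<inter> u2 \<noteq> {}"
          then obtain y1 y2 where yy: "y1 \<in> U" "y2 \<in> U" "gx x1 y1 = gx x2 y2" using x1 x2 by auto
          have "y1 = y2" using gf[OF x1(1,2) yy(1)] gf[OF x2(1,2) yy(2)] yy(3) by metis
          then have "x1 = x2" using ginj[OF x1(1,2) x2(1,2) yy(1)] yy(3) by simp
          then show False using u12(3) x1 x2 by simp
        qed
      qed
      show "\<forall>u\<in>v. \<exists>q. homeomorphism u U f q"
      proof
        fix u assume "u \<in> v"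
        then obtain x where x: "x \<in> X" "f x = y0" and u: "u = gx x ` U" by (auto simp: v_def)
        have "homeomorphism u U f (gx x)"
          unfolding homeomorphism_def
        proof (intro conjI ballI)
          show "continuous_on u f" using fcont gX[OF x] u by (auto intro: continuous_on_subset)
          show "continuous_on U (gx x)" by (rule gcont[OF x])
          show "gx x ` U = u" using u by simp
          show "f ` u = U" using u gf[OF x] by force
          show "f (gx x y) = y" if "y \<in> U" for y using gf[OF x that] .
          show "gx x (f z) = z" if "z \<in> u" for z using that u gf[OF x] by auto
        qed
        then show "\<exists>q. homeomorphism u U f q" by blast
      qed
    qed
  qed
qed

end
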